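(* Let $\mathrm{X}$ be a reflexive Banach space, let $\ell$ be a Schauder sequence space such that $\ell^*$ is also a Schauder sequence space. Let $G=\{g_i\}\subset\mathrm{X}^*$ be an $\ell$-Bessel for $\mathrm{X}$ and $F=\{f_i\}\subset\mathrm{X}$ be an $\ell^*$-Bessel for $\mathrm{X}^*$. Then for every $g\in\mathrm{X}^*$ the series $\sum_i\langle f_i,g\rangle g_i$ converges in $\mathrm{X}^*$; that is, $(F,G)$ is a pair Bessel for $\mathrm{X}^*$.
   Context: $\mathrm{X}$ is a reflexive Banach space, $\mathrm{X}^{**}$ is identified with $\mathrm{X}$, and $\langle f,g\rangle:=g(f)$ for $f\in\mathrm{X}$, $g\in\mathrm{X}^*$. Series are summed in the natural order of $\mathbb{N}$. A BK-space is a Banach space of scalar sequences indexed by $\mathbb{N}$ with continuous coordinate functionals. With $\delta_i=\{\delta_{ij}\}_j$ the canonical vectors, a Schauder sequence space is a BK-space in which $\{\delta_i\}$ is a Schauder basis; its dual $\ell^*$ is identified isometrically with the sequence space $\{\{\phi(\delta_i)\}:\phi\in\ell^*\}$ (normed by $\|\phi\|$), acting by $\phi(\{c_i\})=\sum_i\phi(\delta_i)c_i$. $G=\{g_i\}\subset\mathrm{X}^*$ is an $\ell$-Bessel for $\mathrm{X}$ if there is $B>0$ with $\{\langle f,g_i\rangle\}\in\ell$ and $\|\{\langle f,g_i\rangle\}\|_\ell\le B\|f\|$ for all $f\in\mathrm{X}$; $F=\{f_i\}\subset\mathrm{X}$ is an $\ell^*$-Bessel for $\mathrm{X}^*$ if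 there is $B>0$ with $\{\langle f_i,g\rangle\}\in\ell^*$ and $\|\{\langle f_i,g\rangle\}\|_{\ell^*}\le B\|g\|$ for all $g\in\mathrm{X}^*$. $(F,G)$ is a pair Bessel for $\mathrm{X}^*$ if $S_{GF}:\mathrm{X}^*\to\mathrm{X}^*$, $S_{GF}(g)=\sum_i\langle f_i,g\rangle g_i$, is well defined. *)

theory Defs
  imports "HOL-Analysis.Analysis"
begin

text \<open>Real scalars. A sequence space is a set L of real sequences with a function N
  playing the role of the norm on L.\<close>

definition delta :: "nat \<Rightarrow> nat \<Rightarrow> real" where
  "delta i = (\<lambda>j. if i = j then 1 else 0)"

definition trunc_seq :: "nat \<Rightarrow> (nat \<Rightarrow> real) \<Rightarrow> nat \<Rightarrow> real" where
  "trunc_seq n c = (\<lambda>i. if i < n then c i else 0)"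

definition BK_space :: "(nat \<Rightarrow> real) set \<Rightarrow> ((nat \<Rightarrow> real) \<Rightarrow> real) \<Rightarrow> bool" where
  "BK_space L N \<longleftrightarrow>
     (\<lambda>i. 0) \<in> L \<and> (\<forall>c\<in>L. \<forall>d\<in>L. (\<lambda>i. c i + d i) \<in> L) \<and> (\<forall>a. \<forall>c\<in>L. (\<lambda>i. a * c i) \<in> L) \<and>
     (\<forall>c\<in>L. 0 \<le> N c \<and> (N c = 0 \<longleftrightarrow> c = (\<lambda>i. 0))) \<and>
     (\<forall>a. \<forall>c\<in>L. N (\<lambda>i. a * c i) = \<bar>a\<bar> * N c) \<and>
     (\<forall>c\<in>L. \<forall>d\<in>L. N (\<lambda>i. c i + d i) \<le> N c + N d) \<and>
     (\<forall>x. (\<forall>n. x n \<in> L) \<and> (\<forall>e>0. \<exists>M. \<forall>m\<ge>M. \<forall>n\<ge>M. N (\<lambda>i. x m i - x n i) < e)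
          \<longrightarrow> (\<exists>c\<in>L. (\<lambda>n. N (\<lambda>i. x n i - c i)) \<longlonglongrightarrow> 0)) \<and>
     (\<forall>i. \<exists>K. \<forall>c\<in>L. \<bar>c i\<bar> \<le> K * N c)"

text \<open>Schauder sequence space: BK-space in which the canonical vectors form a Schauder
  basis (by continuity of coordinates, the expansion coefficients of c are the c i).\<close>
definition schauder_seq_space :: "(nat \<Rightarrow> real) set \<Rightarrow> ((nat \<Rightarrow> real) \<Rightarrow> real) \<Rightarrow> bool" where
  "schauder_seq_space L N \<longleftrightarrow> BK_space L N \<and> (\<forall>i. delta i \<in> L) \<and>
     (\<forall>c\<in>L. (\<lambda>n. N (\<lambda>i. c i - trunc_seq n c i)) \<longlonglongrightarrow> 0)"

text \<open>The dual sequence space: sequences d = (phi(delta i))_i for bounded linear phi on L;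
  phi acts by c \<mapsto> \<Sum>i. d i * c i.\<close>
definition dual_seq :: "(nat \<Rightarrow> real) set \<Rightarrow> ((nat \<Rightarrow> real) \<Rightarrow> real) \<Rightarrow> (nat \<Rightarrow> real) set" where
  "dual_seq L N = {d. (\<forall>c\<in>L. summable (\<lambda>i. d i * c i)) \<and>
                      (\<exists>B. \<forall>c\<in>L. \<bar>\<Sum>i. d i * c i\<bar> \<le> B * N c)}"

definition dual_norm :: "(nat \<Rightarrow> real) set \<Rightarrow> ((nat \<Rightarrow> real) \<Rightarrow> real) \<Rightarrow> (nat \<Rightarrow> real) \<Rightarrow> real" where
  "dual_norm L N d = Sup {\<bar>\<Sum>i. d i * c i\<bar> | c. c \<in> L \<and> N c \<le> 1}"

definition reflexive_space :: "'a::real_normed_vector itself \<Rightarrow> bool" where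
  "reflexive_space _ \<longleftrightarrow>
     (\<forall>\<Phi> :: ('a \<Rightarrow>\<^sub>L real) \<Rightarrow>\<^sub>L real. \<exists>x::'a. \<forall>g. blinfun_apply \<Phi> g = blinfun_apply g x)"

definition ell_bessel :: "(nat \<Rightarrow> real) set \<Rightarrow> ((nat \<Rightarrow> real) \<Rightarrow> real) \<Rightarrow>
    (nat \<Rightarrow> ('a::real_normed_vector \<Rightarrow>\<^sub>L real)) \<Rightarrow> bool" where
  "ell_bessel L N G \<longleftrightarrow> (\<exists>B>0. \<forall>f::'a. (\<lambda>i. blinfun_apply (G i) f) \<in> L \<and> N (\<lambda>i. blinfun_apply (G i) f) \<le> B * norm f)"

definition dual_ell_bessel :: "(nat \<Rightarrow> real) set \<Rightarrow> ((nat \<Rightarrow> real) \<Rightarrow> real) \<Rightarrow>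
    (nat \<Rightarrow> 'a::real_normed_vector) \<Rightarrow> bool" where
  "dual_ell_bessel L N F \<longleftrightarrow> (\<exists>B>0. \<forall>g::'a \<Rightarrow>\<^sub>L real.
       (\<lambda>i. blinfun_apply g (F i)) \<in> dual_seq L N \<and> dual_norm L N (\<lambda>i. blinfun_apply g (F i)) \<le> B * norm g)"

definition pair_bessel :: "(nat \<Rightarrow> 'a::real_normed_vector) \<Rightarrow> (nat \<Rightarrow> ('a \<Rightarrow>\<^sub>L real)) \<Rightarrow> bool" where
  "pair_bessel F G \<longleftrightarrow> (\<forall>g::'a \<Rightarrow>\<^sub>L real. summable (\<lambda>i. blinfun_apply g (F i) *\<^sub>R G i))"

end

theory Submission
  imports Defs
begin

lemma dual_norm_bound:
  assumes BK: "BK_space L N" and e: "e \<in> dual_seq L N" and c: "c \<in> L"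
  shows "\<bar>\<Sum>i. e i * c i\<bar> \<le> dual_norm L N e * N c"
proof -
  from e obtain B where B: "\<forall>c\<in>L. \<bar>\<Sum>i. e i * c i\<bar> \<le> B * N c"
    unfolding dual_seq_def by blast
  let ?S = "{\<bar>\<Sum>i. e i * c i\<bar> | c. c \<in> L \<and> N c \<le> 1}"
  have bdd: "bdd_above ?S"
  proof (rule bdd_aboveI)
    fix x assume "x \<in> ?S"
    then obtain c where c: "c \<in> L" "N c \<le> 1" and x: "x = \<bar>\<Sum>i. e i * c i\<bar>" by blast
    have "0 \<le> N c" using BK c unfolding BK_space_def by blast
    have "B * N c \<le> \<bar>B\<bar>"
      proof -
      have "B * N c \<le> \<bar>B\<bar> * N c" using \<open>0 \<le> N c\<close> by (intro mult_right_mono) auto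
      also have "\<dots> \<le> \<bar>B\<bar> * 1" using c(2) by (intro mult_left_mono) auto
      finally show ?thesis by simp
    qed
    then show "x \<le> \<bar>B\<bar>" using B c x by fastforce
  qed
  have z: "(\<lambda>i. 0::real) \<in> L" and Nz: "N (\<lambda>i. 0) = 0" using BK unfolding BK_space_def by auto
  have "0 \<in> ?S" using z Nz by (intro CollectI exI[of _ "\<lambda>i. 0"]) auto
  hence dn0: "0 \<le> dual_norm L N e" unfolding dual_norm_def using bdd by (meson cSup_upper)
  have Nc: "0 \<le> N c" using BK c unfolding BK_space_def by blast
  show ?thesis
  proof (cases "N c = 0")
    case True
    hence "c = (\<lambda>i. 0)" using BK c unfolding BK_space_def by blast
    then show ?thesis using True by simp
  next
    case False
    hence pos: "N c > 0" using Nc by simp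
    define c' where "c' = (\<lambda>i. (1 / N c) * c i)"
    have c'L: "c' \<in> L" using BK c unfolding BK_space_def c'_def by blast
    have "N c' = \<bar>1 / N c\<bar> * N c" using BK c unfolding BK_space_def c'_def by blast
    hence Nc': "N c' = 1" using pos by simp
    have "(\<Sum>i. e i * c' i) = (\<Sum>i. (1 / N c) * (e i * c i))"
      unfolding c'_def by (simp add: algebra_simps)
    also have "\<dots> = (1 / N c) * (\<Sum>i. e i * c i)"
      using e c unfolding dual_seq_def by (intro suminf_mult) blast
    finally have eq: "(\<Sum>i. e i * c' i) = (\<Sum>i. e i * c i) / N c" by simp
    have "\<bar>\<Sum>i. e i * c' i\<bar> \<in> ?S" using c'L Nc' by (intro CollectI exI[of _ c']) auto
    hence "\<bar>\<Sum>i. e i * c' i\<bar> \<le> dual_norm L N e" unfolding dual_norm_def using bdd by (meson cSup_upper)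
    hence "\<bar>\<Sum>i. e i * c i\<bar> / N c \<le> dual_norm L N e" using eq pos by simp
    thus ?thesis using pos by (simp add: divide_le_eq mult.commute)
  qed
qed

lemma trunc_in_dual:
  assumes BK: "BK_space D M" and del: "\<forall>i. delta i \<in> D"
  shows "trunc_seq n d \<in> D"
proof (induction n)
  case 0
  have "trunc_seq 0 d = (\<lambda>i. 0)" unfolding trunc_seq_def by simp
  then show ?case using BK unfolding BK_space_def by simp
next
  case (Suc n)
  have A: "(\<lambda>i. d n * delta n i) \<in> D" using BK del unfolding BK_space_def by blast
  have add: "\<forall>c\<in>D. \<forall>d\<in>D. (\<lambda>i. c i + d i) \<in> D" using BK unfolding BK_space_def by blast
  have "(\<lambda>i. trunc_seq n d i + d n * delta n i) \<in> D" using add[rule_format, OF Suc A] by simp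
  moreover have "(\<lambda>i. trunc_seq n d i + d n * delta n i) = trunc_seq (Suc n) d"
    unfolding trunc_seq_def delta_def by (auto simp: fun_eq_iff less_Suc_eq)
  ultimately show ?case by simp
qed

theorem mainTheorem2:
  fixes L :: "(nat \<Rightarrow> real) set" and N :: "(nat \<Rightarrow> real) \<Rightarrow> real"
    and F :: "nat \<Rightarrow> 'a::banach" and G :: "nat \<Rightarrow> ('a \<Rightarrow>\<^sub>L real)"
  assumes "reflexive_space TYPE('a)"
    and "schauder_seq_space L N"
    and "schauder_seq_space (dual_seq L N) (dual_norm L N)"
    and "ell_bessel L N G"
    and "dual_ell_bessel L N F"
  shows "pair_bessel F G"
  unfolding pair_bessel_def
proof
  fix g :: "'a \<Rightarrow>\<^sub>L real"
  define d where "d = (\<lambda>i. blinfun_apply g (F i))"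
  have BK: "BK_space L N" using assms(2) unfolding schauder_seq_space_def by blast
  have BKD: "BK_space (dual_seq L N) (dual_norm L N)" and del: "\<forall>i. delta i \<in> dual_seq L N"
    and tail: "\<forall>c\<in>dual_seq L N. (\<lambda>n. dual_norm L N (\<lambda>i. c i - trunc_seq n c i)) \<longlonglongrightarrow> 0"
    using assms(3) unfolding schauder_seq_space_def by blast+
  obtain Bg where Bg: "Bg > 0" "\<And>f. (\<lambda>i. blinfun_apply (G i) f) \<in> L \<and> N (\<lambda>i. blinfun_apply (G i) f) \<le> Bg * norm f"
    using assms(4) unfolding ell_bessel_def by blast
  have dD: "d \<in> dual_seq L N" using assms(5) unfolding dual_ell_bessel_def d_def by blast
  define r where "r n = (\<lambda>i. d i - trunc_seq n d i)" for n
  have rD: "r n \<in> dual_seq L N" for n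
  proof -
    have "trunc_seq n d \<in> dual_seq L N" using trunc_in_dual[OF BKD del] .
    hence A: "(\<lambda>i. (-1) * trunc_seq n d i) \<in> dual_seq L N" using BKD unfolding BK_space_def by blast
    have add: "\<forall>c\<in>dual_seq L N. \<forall>d\<in>dual_seq L N. (\<lambda>i. c i + d i) \<in> dual_seq L N" using BKD unfolding BK_space_def by blast
    have "(\<lambda>i. d i + (-1) * trunc_seq n d i) \<in> dual_seq L N" using add[rule_format, OF dD A] by simp
    thus ?thesis unfolding r_def by simp
  qed
  have rlim: "(\<lambda>n. dual_norm L N (r n)) \<longlonglongrightarrow> 0" using tail dD unfolding r_def by blast
  have rsum: "(\<Sum>i. r n i * c i) = (\<Sum>i. d i * c i) - (\<Sum>i<n. d i * c i)" if c: "c \<in> L" for n c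
  proof -
    have s1: "summable (\<lambda>i. d i * c i)" using dD c unfolding dual_seq_def by blast
    have tr: "(\<lambda>i. trunc_seq n d i * c i) = (\<lambda>i. if i < n then d i * c i else 0)"
      unfolding trunc_seq_def by auto
    have fin: "(\<Sum>i. trunc_seq n d i * c i) = (\<Sum>i<n. d i * c i)"
      unfolding tr by (subst suminf_finite[of "{..<n}"]) auto
    have s2: "summable (\<lambda>i. trunc_seq n d i * c i)"
      unfolding tr by (rule summable_finite[of "{..<n}"]) auto
    have "(\<Sum>i. r n i * c i) = (\<Sum>i. d i * c i - trunc_seq n d i * c i)"
      unfolding r_def by (simp add: algebra_simps)
    also have "\<dots> = (\<Sum>i. d i * c i) - (\<Sum>i. trunc_seq n d i * c i)"
      using suminf_diff[OF s1 s2] by simp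
    finally show ?thesis using fin by simp
  qed
  show "summable (\<lambda>i. blinfun_apply g (F i) *\<^sub>R G i)"
    unfolding summable_Cauchy
  proof (intro allI impI)
    fix e :: real assume e: "e > 0"
    have "\<forall>\<^sub>F n in sequentially. norm (dual_norm L N (r n)) < e / (2 * Bg)"
    proof (rule order_tendstoD(2))
      show "(\<lambda>n. norm (dual_norm L N (r n))) \<longlonglongrightarrow> 0" using rlim by (rule tendsto_norm_zero)
      show "(0::real) < e / (2 * Bg)" using Bg(1) e by simp
    qed
    then obtain M where M: "\<And>n. n \<ge> M \<Longrightarrow> \<bar>dual_norm L N (r n)\<bar> < e / (2 * Bg)"
      unfolding eventually_sequentially by auto
    show "\<exists>M. \<forall>m\<ge>M. \<forall>n. norm (\<Sum>i = m..<n. blinfun_apply g (F i) *\<^sub>R G i) < e"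
    proof (intro exI allI impI)
      fix m n assume mM: "m \<ge> M"
      show "norm (\<Sum>i = m..<n. blinfun_apply g (F i) *\<^sub>R G i) < e"
      proof (cases "m \<le> n")
        case False
        then show ?thesis using e by simp
      next
        case True
        let ?b = "Bg * (\<bar>dual_norm L N (r m)\<bar> + \<bar>dual_norm L N (r n)\<bar>)"
        have "norm (\<Sum>i = m..<n. blinfun_apply g (F i) *\<^sub>R G i) \<le> ?b"
        proof (rule norm_blinfun_bound)
          show "0 \<le> ?b" using Bg(1) by simp
        next
          fix f :: 'a
          define c where "c = (\<lambda>i. blinfun_apply (G i) f)"
          have cL: "c \<in> L" and Nc: "N c \<le> Bg * norm f" using Bg(2)[of f] unfolding c_def by auto
          have "blinfun_apply (\<Sum>i = m..<n. blinfun_apply g (F i) *\<^sub>R G i) f = (\<Sum>i = m..<n. d i * c i)"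
            unfolding d_def c_def by (simp add: blinfun.sum_left blinfun.scaleR_left)
          also have "\<dots> = (\<Sum>i<n. d i * c i) - (\<Sum>i<m. d i * c i)"
            using True by (simp add: sum_diff_nat_ivl lessThan_atLeast0)
          also have "\<dots> = (\<Sum>i. r m i * c i) - (\<Sum>i. r n i * c i)"
            using rsum[OF cL] by simp
          finally have eq: "blinfun_apply (\<Sum>i = m..<n. blinfun_apply g (F i) *\<^sub>R G i) f
              = (\<Sum>i. r m i * c i) - (\<Sum>i. r n i * c i)" .
          have a1: "\<bar>\<Sum>i. r m i * c i\<bar> \<le> \<bar>dual_norm L N (r m)\<bar> * (Bg * norm f)"
          proof -
            have N0: "0 \<le> N c" using BK cL unfolding BK_space_def by blast
            have "\<bar>\<Sum>i. r m i * c i\<bar> \<le> dual_norm L N (r m) * N c" using dual_norm_bound[OF BK rD cL] .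
            also have "\<dots> \<le> \<bar>dual_norm L N (r m)\<bar> * N c" using N0 by (intro mult_right_mono) auto
            also have "\<dots> \<le> \<bar>dual_norm L N (r m)\<bar> * (Bg * norm f)" using Nc by (intro mult_left_mono) auto
            finally show ?thesis .
          qed
          have a2: "\<bar>\<Sum>i. r n i * c i\<bar> \<le> \<bar>dual_norm L N (r n)\<bar> * (Bg * norm f)"
          proof -
            have N0: "0 \<le> N c" using BK cL unfolding BK_space_def by blast
            have "\<bar>\<Sum>i. r n i * c i\<bar> \<le> dual_norm L N (r n) * N c" using dual_norm_bound[OF BK rD cL] .
            also have "\<dots> \<le> \<bar>dual_norm L N (r n)\<bar> * N c" using N0 by (intro mult_right_mono) auto
            also have "\<dots> \<le> \<bar>dual_norm L N (r n)\<bar> * (Bg * norm f)" using Nc by (intro mult_left_mono) auto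
            finally show ?thesis .
          qed
          show "norm (blinfun_apply (\<Sum>i = m..<n. blinfun_apply g (F i) *\<^sub>R G i) f) \<le> ?b * norm f"
            unfolding eq using a1 a2 by (simp add: algebra_simps)
        qed
        also have "\<dots> < Bg * (e / (2 * Bg) + e / (2 * Bg))"
          using M[of m] M[of n] mM True Bg(1) by (intro mult_strict_left_mono add_strict_mono) auto
        also have "\<dots> = e" using Bg(1) by (simp add: field_simps)
        finally show ?thesis .
      qed
    qed
  qed
qed

end
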